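(* Let $k\ge1$ and let $q_1,q_2$ be Gaussian beams of degree $k$ with poles $x_1,x_2\in\mathbb S^2$ respectively, and let $G_1,G_2$ be the great circles perpendicular to $x_1,x_2$. Let $0\le\beta\le\pi$ be the angle between $x_1$ and $x_2$. Then $$\langle q_1,q_2\rangle=\int_{\mathbb S^2}q_1\overline{q_2}=e^{ik\alpha}\left(\cos\frac\beta2\right)^{2k},$$ where $e^{ik\alpha}$, $\alpha\in[-\pi/k,\pi/k)$, is the phase shift at the intersection points of $G_1$ and $G_2$, namely $$e^{ik\alpha}=\frac{q_1(y_1)}{q_2(y_1)}=\frac{q_1(y_2)}{q_2(y_2)},$$ $y_1,y_2$ being the two intersection points of $G_1$ and $G_2$; if the poles coincide, $e^{ik\alpha}=q_1(y)/q_2(y)$ for any point $y$ where they do not vanish.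
   Context: $\mathbb S^2\subset\mathbb R^3$ is the round unit sphere with coordinates $x=(\sin\phi\cos\theta,\sin\phi\sin\theta,\cos\phi)$. The standard Gaussian beam of degree $k$ is $Q_k(\phi,\theta)=C_kP_k^k(\cos\phi)e^{ik\theta}$, where $P_k^k$ is the associated Legendre function and $C_k>0$ normalizes $\|Q_k\|_{L^2(\mathbb S^2)}=1$; it has pole the north pole $(0,0,1)$, concentrates on the equator and propagates in the positive direction (right-hand rule). A Gaussian beam of degree $k$ with pole $x\in\mathbb S^2$ is a function of the form $q(y)=e^{ic}Q_k(Ry)$, $c\in\mathbb R$, where $R\in SO(3)$ satisfies $Rx=(0,0,1)$; its modulus is maximal on the great circle perpendicular to $x$. *)

theory Defs
  imports "HOL-Analysis.Analysis"
begin

definition sph :: "real \<Rightarrow> real \<Rightarrow> real^3" where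
  "sph phi theta = vector [sin phi * cos theta, sin phi * sin theta, cos phi]"

text \<open>Integral over the round unit sphere w.r.t. the standard area measure,
  written in spherical coordinates (area element sin phi dphi dtheta).\<close>
definition sphere_integral :: "(real^3 \<Rightarrow> complex) \<Rightarrow> complex" where
  "sphere_integral f =
     integral (cbox (0,0) (pi, 2*pi))
       (\<lambda>p. complex_of_real (sin (fst p)) * f (sph (fst p) (snd p)))"

definition sphere_inner :: "(real^3 \<Rightarrow> complex) \<Rightarrow> (real^3 \<Rightarrow> complex) \<Rightarrow> complex" where
  "sphere_inner f g = sphere_integral (\<lambda>y. f y * cnj (g y))"

definition legendreP :: "nat \<Rightarrow> real \<Rightarrow> real" where
  "legendreP l t = (deriv ^^ l) (\<lambda>s. (s^2 - 1)^l) t / (2^l * fact l)"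

definition assoc_legendreP :: "nat \<Rightarrow> nat \<Rightarrow> real \<Rightarrow> real" where
  "assoc_legendreP l m t = (-1)^m * (sqrt (1 - t^2))^m * (deriv ^^ m) (legendreP l) t"

text \<open>Unnormalized standard beam P_k^k(cos phi) e^{i k theta}, as a function of the point.\<close>
definition Qraw :: "nat \<Rightarrow> real^3 \<Rightarrow> complex" where
  "Qraw k y = complex_of_real (assoc_legendreP k k (y$3)) * cis (real k * Arg (Complex (y$1) (y$2)))"

definition Cnorm :: "nat \<Rightarrow> real" where
  "Cnorm k = 1 / sqrt (Re (sphere_inner (Qraw k) (Qraw k)))"

definition Qstd :: "nat \<Rightarrow> real^3 \<Rightarrow> complex" where
  "Qstd k y = complex_of_real (Cnorm k) * Qraw k y"

definition north_pole :: "real^3" where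
  "north_pole = vector [0, 0, 1]"

definition rotation3 :: "real^3^3 \<Rightarrow> bool" where
  "rotation3 R \<longleftrightarrow> orthogonal_matrix R \<and> det R = 1"

definition gaussian_beam :: "nat \<Rightarrow> real^3 \<Rightarrow> (real^3 \<Rightarrow> complex) \<Rightarrow> bool" where
  "gaussian_beam k x q \<longleftrightarrow>
     (\<exists>c R. rotation3 R \<and> R *v x = north_pole \<and>
            (\<forall>y\<in>sphere 0 1. q y = cis c * Qstd k (R *v y)))"

end

theory Submission
  imports Defs "HOL-Computational_Algebra.Polynomial"
begin


lemma cis_integral:
  fixes n :: int
  shows "((\<lambda>t. cis (of_int n * t)) has_integral (if n = 0 then of_real (2*pi) else 0)) {0..2*pi}"
proof (cases "n = 0")
  case True
  then show ?thesis using has_integral_const_real[of "1::complex" 0 "2*pi"] by (simp add: scaleR_conv_of_real)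
next
  case False
  have d: "((\<lambda>t. cis (of_int n * t) / (\<i> * of_int n)) has_vector_derivative cis (of_int n * t)) (at t within {0..2*pi})" for t
  proof -
    have "((\<lambda>z. exp (\<i> * of_int n * z) / (\<i> * of_int n)) has_field_derivative exp (\<i> * of_int n * of_real t)) (at (of_real t))"
      using False by (auto intro!: derivative_eq_intros)
    from has_vector_derivative_real_field[OF this]
    have "((\<lambda>x. exp (\<i> * of_int n * of_real x) / (\<i> * of_int n)) has_vector_derivative exp (\<i> * of_int n * of_real t)) (at t)" .
    then show ?thesis
      by (simp add: cis_conv_exp has_vector_derivative_at_within mult.commute mult.left_commute)
  qed
  have "((\<lambda>t. cis (of_int n * t)) has_integral (cis (of_int n * (2*pi)) / (\<i> * of_int n) - cis (of_int n * 0) / (\<i> * of_int n))) {0..2*pi}"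
    by (rule fundamental_theorem_of_calculus) (use d in auto)
  moreover have "cis (of_int n * (2*pi)) = 1"
  proof -
    have "of_int n * (2*pi) = (2*pi) * of_int n" by simp
    then show ?thesis by (simp only: cis.ctr cos_int_2pin sin_int_2pin) (simp add: one_complex.ctr)
  qed
  ultimately show ?thesis using False by simp
qed

lemma theta_integral:
  fixes w1 w2 :: complex
  shows "((\<lambda>t. (w1 * of_real (cos t) + w2 * of_real (sin t)) ^ j) has_integral
          (if even j then of_real (2*pi) * of_nat (j choose (j div 2)) * ((w1^2 + w2^2)/4) ^ (j div 2) else 0)) {0..2*pi}"
proof -
  define P where "P = (w1 - \<i> * w2) / 2"
  define Q where "Q = (w1 + \<i> * w2) / 2"
  have eq: "(w1 * of_real (cos t) + w2 * of_real (sin t)) ^ j =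
     (\<Sum>l\<le>j. of_nat (j choose l) * P^l * Q^(j-l) * cis (of_int (2 * int l - int j) * t))" for t
  proof -
    have "w1 * of_real (cos t) + w2 * of_real (sin t) = P * cis t + Q * cis (-t)"
      by (simp add: P_def Q_def cis.ctr complex_eq_iff field_simps)
    then have "(w1 * of_real (cos t) + w2 * of_real (sin t)) ^ j =
        (\<Sum>l\<le>j. of_nat (j choose l) * (P * cis t)^l * (Q * cis (-t))^(j-l))"
      by (simp add: binomial_ring)
    also have "\<dots> = (\<Sum>l\<le>j. of_nat (j choose l) * P^l * Q^(j-l) * cis (of_int (2 * int l - int j) * t))"
    proof (rule sum.cong[OF refl])
      fix l assume "l \<in> {..j}"
      then have lj: "l \<le> j" by simp
      have "(P * cis t)^l * (Q * cis (-t))^(j-l) = P^l * Q^(j-l) * (cis t ^ l * cis (-t) ^ (j-l))"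
        by (simp add: power_mult_distrib)
      also have "cis t ^ l * cis (-t) ^ (j-l) = cis (real l * t) * cis (real (j - l) * (-t))"
        by (simp only: Complex.DeMoivre)
      also have "cis (real l * t) * cis (real (j - l) * (-t)) = cis (of_int (2 * int l - int j) * t)"
        using lj by (simp add: cis_mult of_nat_diff algebra_simps)
      finally show "of_nat (j choose l) * (P * cis t)^l * (Q * cis (-t))^(j-l) =
          of_nat (j choose l) * P^l * Q^(j-l) * cis (of_int (2 * int l - int j) * t)"
        by (simp add: mult.assoc)
    qed
    finally show ?thesis .
  qed
  have "((\<lambda>t. \<Sum>l\<le>j. of_nat (j choose l) * P^l * Q^(j-l) * cis (of_int (2 * int l - int j) * t)) has_integral
        (\<Sum>l\<le>j. of_nat (j choose l) * P^l * Q^(j-l) * (if 2 * int l - int j = 0 then of_real (2*pi) else 0))) {0..2*pi}"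
    by (intro has_integral_sum has_integral_mult_right cis_integral) auto
  moreover have "(\<Sum>l\<le>j. of_nat (j choose l) * P^l * Q^(j-l) * (if 2 * int l - int j = 0 then of_real (2*pi) else 0))
      = (if even j then of_real (2*pi) * of_nat (j choose (j div 2)) * ((w1^2 + w2^2)/4) ^ (j div 2) else 0)"
  proof (cases "even j")
    case True
    then obtain m where m: "j = 2 * m" by blast
    have "(\<Sum>l\<le>j. of_nat (j choose l) * P^l * Q^(j-l) * (if 2 * int l - int j = 0 then of_real (2*pi) else 0))
        = (\<Sum>l\<le>j. if l = m then of_nat (j choose l) * P^l * Q^(j-l) * of_real (2*pi) else 0)"
      by (rule sum.cong) (auto simp: m)
    also have "\<dots> = of_nat (j choose m) * P^m * Q^(j-m) * of_real (2*pi)"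
      by (simp add: m)
    also have "P^m * Q^(j-m) = ((w1^2 + w2^2)/4) ^ m"
      by (simp add: m P_def Q_def power_mult_distrib[symmetric] power2_eq_square algebra_simps)
    ultimately show ?thesis using True m by simp
  next
    case False
    then have "\<And>l. 2 * int l - int j \<noteq> 0" by presburger
    then show ?thesis using False by simp
  qed
  ultimately show ?thesis using eq by simp
qed

lemma phi_integral:
  "((\<lambda>t. sin t * cos t ^ a) has_integral ((1 + (-1)^a) / (real a + 1))) {0..pi}"
proof -
  have d: "((\<lambda>t. -(cos t ^ Suc a) / (real a + 1)) has_real_derivative sin t * cos t ^ a) (at t within {0..pi})" for t
  proof -
    have D: "((\<lambda>t. cos t ^ Suc a) has_real_derivative (1 + of_nat a) * (- sin t * cos t ^ a)) (at t)"
      by (rule DERIV_power_Suc) (rule DERIV_cos)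
    have "((\<lambda>t. -(cos t ^ Suc a) / (real a + 1)) has_real_derivative -((1 + of_nat a) * (- sin t * cos t ^ a)) / (real a + 1)) (at t)"
      using DERIV_cdivide[OF DERIV_minus[OF D], of "real a + 1"] by simp
    moreover have "-((1 + of_nat a) * (- sin t * cos t ^ a)) / (real a + 1) = sin t * cos t ^ a"
      by (simp add: field_simps)
    ultimately show ?thesis by (metis has_field_derivative_at_within)
  qed
  have "((\<lambda>t. sin t * cos t ^ a) has_integral ((-(cos pi ^ Suc a) / (real a + 1)) - (-(cos 0 ^ Suc a) / (real a + 1)))) {0..pi}"
    by (rule fundamental_theorem_of_calculus) (use d in \<open>auto simp: has_real_derivative_iff_has_vector_derivative\<close>)
  then show ?thesis by (simp add: field_simps)
qed



lemma pascal_sum: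
  fixes g :: "nat \<Rightarrow> 'a::comm_ring_1"
  shows "(\<Sum>s\<le>Suc j. of_nat (Suc j choose s) * g s) =
         (\<Sum>s\<le>j. of_nat (j choose s) * g s) + (\<Sum>s\<le>j. of_nat (j choose s) * g (Suc s))"
proof -
  have A: "(\<Sum>s\<le>Suc j. of_nat (Suc j choose s) * g s) =
      g 0 + (\<Sum>s\<le>j. of_nat (j choose s) * g (Suc s)) + (\<Sum>s\<le>j. of_nat (j choose Suc s) * g (Suc s))"
  proof -
    have "(\<Sum>s\<le>Suc j. of_nat (Suc j choose s) * g s) = of_nat (Suc j choose 0) * g 0 + (\<Sum>s\<le>j. of_nat (Suc j choose Suc s) * g (Suc s))"
      by (rule sum.atMost_Suc_shift)
    also have "\<dots> = g 0 + (\<Sum>s\<le>j. of_nat (j choose s) * g (Suc s) + of_nat (j choose Suc s) * g (Suc s))"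
      by (simp add: algebra_simps)
    finally show ?thesis by (simp add: sum.distrib algebra_simps)
  qed
  have B: "(\<Sum>s\<le>j. of_nat (j choose s) * g s) = (\<Sum>s\<le>Suc j. of_nat (j choose s) * g s)"
    by (simp add: binomial_eq_0)
  also have "\<dots> = of_nat (j choose 0) * g 0 + (\<Sum>s\<le>j. of_nat (j choose Suc s) * g (Suc s))"
    by (rule sum.atMost_Suc_shift)
  finally show ?thesis using A by (simp add: algebra_simps)
qed

definition Ssum :: "nat \<Rightarrow> nat \<Rightarrow> real" where
  "Ssum i j = (\<Sum>s\<le>j. real (j choose s) * ((-1)^s / (2 * real i + 2 * real s + 1)))"

definition Sclosed :: "nat \<Rightarrow> nat \<Rightarrow> real" where
  "Sclosed i j = 4^j * fact (2*i) * fact j * fact (i+j) / (fact i * fact (2*i+2*j+1))"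

lemma Ssum_Suc: "Ssum i (Suc j) = Ssum i j - Ssum (Suc i) j"
proof -
  have "Ssum i (Suc j) = Ssum i j + (\<Sum>s\<le>j. real (j choose s) * ((-1)^(Suc s) / (2 * real i + 2 * real (Suc s) + 1)))"
    unfolding Ssum_def by (rule pascal_sum)
  also have "(\<Sum>s\<le>j. real (j choose s) * ((-1)^(Suc s) / (2 * real i + 2 * real (Suc s) + 1))) = - Ssum (Suc i) j"
    unfolding Ssum_def sum_negf[symmetric]
    by (rule sum.cong) (auto simp: field_simps)
  finally show ?thesis by simp
qed

lemma Sclosed_Suc: "Sclosed i (Suc j) = Sclosed i j - Sclosed (Suc i) j"
proof -
  define a where "a = (fact (2*i) :: real)"
  define b where "b = (fact j :: real)"
  define c where "c = (fact (i+j) :: real)"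
  define d where "d = (fact i :: real)"
  define e where "e = (fact (2*i+2*j+1) :: real)"
  have pos: "a > 0" "b > 0" "c > 0" "d > 0" "e > 0" unfolding a_def b_def c_def d_def e_def by auto
  have 1: "Sclosed i (Suc j) = 4 * 4^j * a * ((real j + 1) * b) * ((real i + real j + 1) * c) / (d * ((2*real i+2*real j+3) * (2*real i+2*real j+2) * e))"
  proof -
    have "2*i+2*Suc j+1 = Suc (Suc (2*i+2*j+1))" "i + Suc j = Suc (i+j)" by simp_all
    then show ?thesis unfolding Sclosed_def a_def b_def c_def d_def e_def
      by (simp only: fact_Suc power_Suc) (simp add: algebra_simps)
  qed
  have 2: "Sclosed (Suc i) j = 4^j * ((2*real i+2) * (2*real i+1) * a) * b * ((real i + real j + 1) * c) / (((real i + 1) * d) * ((2*real i+2*real j+3) * (2*real i+2*real j+2) * e))"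
  proof -
    have "2*Suc i+2*j+1 = Suc (Suc (2*i+2*j+1))" "Suc i + j = Suc (i+j)" "2 * Suc i = Suc (Suc (2*i))" by simp_all
    then show ?thesis unfolding Sclosed_def a_def b_def c_def d_def e_def
      by (simp only: fact_Suc) (simp add: algebra_simps)
  qed
  have 3: "Sclosed i j = 4^j * a * b * c / (d * e)"
    unfolding Sclosed_def a_def b_def c_def d_def e_def by simp
  define Q where "Q = real i + real j + 1"
  define I where "I = real i + 1"
  have QI: "Q > 0" "I > 0" unfolding Q_def I_def by auto
  have r1: "Sclosed i (Suc j) = 4 * 4^j * a * b * c * (Q - I + 1) * Q / (d * e * (2*Q+1) * (2*Q))"
    unfolding 1 Q_def I_def by (simp add: algebra_simps)
  have r2: "Sclosed (Suc i) j = 4^j * a * b * c * (2*I) * (2*I - 1) * Q / (I * d * e * (2*Q+1) * (2*Q))"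
    unfolding 2 Q_def I_def by (simp add: algebra_simps)
  have r3: "Sclosed i j = 4^j * a * b * c / (d * e)" by (rule 3)
  define P where "P = 2*Q+1"
  have ne: "P > 0" using QI unfolding P_def by linarith
  have r1': "Sclosed i (Suc j) = 4 * 4^j * a * b * c * (Q - I + 1) * Q / (d * e * P * (2*Q))"
    unfolding r1 P_def ..
  have r2': "Sclosed (Suc i) j = 4^j * a * b * c * (2*I) * (2*I - 1) * Q / (I * d * e * P * (2*Q))"
    unfolding r2 P_def ..
  have "Sclosed i j * (d * e * P * (2*Q) * I) - Sclosed (Suc i) j * (d * e * P * (2*Q) * I) - Sclosed i (Suc j) * (d * e * P * (2*Q) * I) = 0"
    unfolding r1' r2' r3 using pos QI ne
    by (simp add: field_simps) (simp add: P_def algebra_simps)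
  then have "(Sclosed i j - Sclosed (Suc i) j - Sclosed i (Suc j)) * (d * e * P * (2*Q) * I) = 0"
    by (simp add: algebra_simps)
  then show ?thesis using pos QI ne by simp
qed

lemma Ssum_closed: "Ssum i j = Sclosed i j"
proof (induction j arbitrary: i)
  case 0
  have f: "fact (2*i+1) = (2*real i+1) * (fact (2*i) :: real)"
    by (simp add: fact_Suc algebra_simps)
  moreover have "Ssum i 0 = 1 / (2 * real i + 1)" by (simp add: Ssum_def)
  moreover have "Sclosed i 0 = (fact (2*i) * fact i) / ((fact (2*i) * fact i) * (2 * real i + 1))"
    unfolding Sclosed_def using \<open>fact (2*i+1) = (2*real i+1) * (fact (2*i) :: real)\<close>
    by (simp add: algebra_simps)
  moreover have "(fact (2*i) * fact i :: real) > 0" by auto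
  ultimately show ?case by simp
next
  case (Suc j)
  then show ?case by (simp add: Ssum_Suc Sclosed_Suc)
qed



lemma phi_integral2:
  "((\<lambda>t. sin t * sin t ^ (2*l) * cos t ^ a) has_integral
     (\<Sum>s\<le>l. real (l choose s) * (-1)^s * ((1 + (-1)^(a+2 * s)) / (real (a+2 * s) + 1)))) {0..pi}"
proof -
  have eq: "sin t * sin t ^ (2*l) * cos t ^ a = (\<Sum>s\<le>l. real (l choose s) * (-1)^s * (sin t * cos t ^ (a+2 * s)))" for t
  proof -
    have "sin t ^ (2*l) = ((- (cos t ^ 2)) + 1) ^ l"
      by (simp only: power_mult sin_squared_eq) simp
    also have "\<dots> = (\<Sum>s\<le>l. real (l choose s) * (- (cos t ^ 2))^s * 1^(l-s))"
      by (rule binomial_ring)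
    also have "\<dots> = (\<Sum>s\<le>l. real (l choose s) * (-1)^s * cos t ^ (2 * s))"
    proof (rule sum.cong[OF refl])
      fix s
      have "(- (cos t ^ 2))^s = (-1)^s * cos t ^ (2 * s)"
        by (metis power_minus power_mult)
      then show "real (l choose s) * (- (cos t ^ 2))^s * 1^(l-s) = real (l choose s) * (-1)^s * cos t ^ (2 * s)"
        by simp
    qed
    finally have "sin t * sin t ^ (2*l) * cos t ^ a = sin t * cos t ^ a * (\<Sum>s\<le>l. real (l choose s) * (-1)^s * cos t ^ (2 * s))"
      by simp
    also have "\<dots> = (\<Sum>s\<le>l. sin t * cos t ^ a * (real (l choose s) * (-1)^s * cos t ^ (2 * s)))"
      by (rule sum_distrib_left)
    also have "\<dots> = (\<Sum>s\<le>l. real (l choose s) * (-1)^s * (sin t * cos t ^ (a+2 * s)))"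
      by (rule sum.cong[OF refl]) (simp only: power_add mult_ac)
    finally show ?thesis .
  qed
  show ?thesis
    unfolding eq by (intro has_integral_sum has_integral_mult_right phi_integral) auto
qed



definition lin :: "complex^3 \<Rightarrow> real^3 \<Rightarrow> complex" where
  "lin a y = a$1 * of_real (y$1) + a$2 * of_real (y$2) + a$3 * of_real (y$3)"

definition bil :: "complex^3 \<Rightarrow> complex^3 \<Rightarrow> complex" where
  "bil a c = a$1 * c$1 + a$2 * c$2 + a$3 * c$3"

lemma lin_sph: "lin a (sph p t) = a$3 * of_real (cos p) + of_real (sin p) * (a$1 * of_real (cos t) + a$2 * of_real (sin t))"
  by (simp add: lin_def sph_def algebra_simps)

lemma sum_even_odd:
  fixes f :: "nat \<Rightarrow> 'a::comm_monoid_add"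
  shows "(\<Sum>j\<le>2*n. f j) = (\<Sum>l\<le>n. f (2*l)) + (\<Sum>l<n. f (2*l+1))"
proof (induction n)
  case 0
  then show ?case by simp
next
  case (Suc n)
  have "(\<Sum>j\<le>2*Suc n. f j) = (\<Sum>j\<le>2*n. f j) + f (2*n+1) + f (2*n+2)"
    by (simp add: ac_simps)
  then show ?case using Suc by (simp add: ac_simps)
qed

lemma coef_identity:
  assumes "l \<le> n"
  shows "real (2*n choose 2*l) * real (2*l choose l) / 4^l * (2 * Sclosed (n-l) l) = 2 * real (n choose l) / (2 * real n + 1)"
proof -
  have b1: "real (2*n choose 2*l) = fact (2*n) / (fact (2*l) * fact (2*n-2*l))"
    using assms by (simp add: binomial_fact)
  have b2: "real (2*l choose l) = fact (2*l) / (fact l * fact l)"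
    using binomial_fact[of l "2*l", where 'a=real] by (simp add: mult_2)
  have b3: "real (n choose l) = fact n / (fact l * fact (n-l))"
    using assms by (simp add: binomial_fact)
  have s: "Sclosed (n-l) l = 4^l * fact (2*n-2*l) * fact l * fact n / (fact (n-l) * fact (2*n+1))"
    unfolding Sclosed_def using assms by (simp add: algebra_simps)
  have f: "fact (2*n+1) = (2*real n+1) * (fact (2*n) :: real)"
    by (simp add: fact_Suc algebra_simps)
  have pos: "(fact (2*n) :: real) > 0" "(fact (2*l) :: real) > 0" "(fact (2*n-2*l) :: real) > 0"
     "(fact l :: real) > 0" "(fact (n-l) :: real) > 0" "(fact n :: real) > 0" "2*real n+1 > 0" "(4::real)^l > 0"
    by auto
  define N where "N = 2*real n+1"
  have N: "N > 0" unfolding N_def by simp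
  show ?thesis unfolding b1 b2 b3 s f N_def[symmetric] using pos N
    by (simp add: field_simps)
qed

lemma power_integral:
  fixes w :: "complex^3"
  shows "sphere_integral (\<lambda>y. lin w y ^ (2*n)) = of_real (4*pi/(2*real n+1)) * bil w w ^ n"
proof -
  define m where "m = 2*n"
  define lam where "lam = w$1^2 + w$2^2"
  define H where "H j = (if even j then of_real (2*pi) * of_nat (j choose (j div 2)) * ((w$1^2 + w$2^2)/4) ^ (j div 2) else (0::complex))" for j
  define Phi where "Phi a l = (\<Sum>s\<le>l. real (l choose s) * (-1)^s * ((1 + (-1)^(a+2 * s)) / (real (a+2 * s) + 1)))" for a l
  define F where "F p = of_real (sin (fst p)) * (w$3 * of_real (cos (fst p)) + of_real (sin (fst p)) * (w$1 * of_real (cos (snd p)) + w$2 * of_real (sin (snd p)))) ^ m" for p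
  define G where "G x j = of_nat (m choose j) * (of_real (sin x) * of_real (sin x)^j * (w$3 * of_real (cos x))^(m-j))" for x j
  define T where "T j = of_nat (m choose j) * w$3^(m-j) * H j * of_real (Phi (m-j) (j div 2))" for j
  have 1: "sphere_integral (\<lambda>y. lin w y ^ m) = integral (cbox (0,0) (pi,2*pi)) F"
    unfolding sphere_integral_def F_def lin_sph by simp
  have cont: "continuous_on (cbox (0,0) (pi,2*pi)) F" unfolding F_def by (intro continuous_intros)
  have 2: "integral (cbox (0,0) (pi,2*pi)) F = integral (cbox 0 pi) (\<lambda>x. integral (cbox 0 (2*pi)) (\<lambda>y. F (x,y)))"
    by (rule integral_prod_continuous[OF cont])
  have inner: "integral (cbox 0 (2*pi)) (\<lambda>y. F (x,y)) = (\<Sum>j\<le>m. G x j * H j)" for x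
  proof -
    have Fe: "F (x,y) = (\<Sum>j\<le>m. G x j * (w$1 * of_real (cos y) + w$2 * of_real (sin y))^j)" for y
    proof -
      define h where "h = w$1 * of_real (cos y) + w$2 * of_real (sin y)"
      have "(w$3 * of_real (cos x) + of_real (sin x) * h) ^ m = (of_real (sin x) * h + w$3 * of_real (cos x)) ^ m"
        by (simp add: add.commute)
      also have "\<dots> = (\<Sum>j\<le>m. of_nat (m choose j) * (of_real (sin x) * h)^j * (w$3 * of_real (cos x))^(m-j))"
        by (rule binomial_ring)
      finally have "F (x,y) = of_real (sin x) * (\<Sum>j\<le>m. of_nat (m choose j) * (of_real (sin x) * h)^j * (w$3 * of_real (cos x))^(m-j))"
        unfolding F_def h_def by simp
      also have "\<dots> = (\<Sum>j\<le>m. G x j * h^j)"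
        unfolding sum_distrib_left G_def by (rule sum.cong[OF refl]) (simp add: power_mult_distrib mult_ac)
      finally show ?thesis unfolding h_def .
    qed
    have "((\<lambda>y. \<Sum>j\<le>m. G x j * (w$1 * of_real (cos y) + w$2 * of_real (sin y))^j) has_integral (\<Sum>j\<le>m. G x j * H j)) {0..2*pi}"
      unfolding H_def by (intro has_integral_sum has_integral_mult_right theta_integral) auto
    then show ?thesis unfolding Fe by (simp add: integral_unique)
  qed
  have outer: "((\<lambda>x. G x j * H j) has_integral T j) {0..pi}" for j
  proof (cases "even j")
    case True
    then obtain l where l: "j = 2*l" by blast
    have "((\<lambda>x. of_real (sin x * sin x ^ (2*l) * cos x ^ (m-j)) :: complex) has_integral of_real (Phi (m-j) l)) {0..pi}"
      using has_integral_of_real[OF phi_integral2[of l "m-j"], where 'b=complex] unfolding Phi_def .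
    then have "((\<lambda>x. (of_nat (m choose j) * w$3^(m-j) * H j) * of_real (sin x * sin x ^ (2*l) * cos x ^ (m-j))) has_integral
        (of_nat (m choose j) * w$3^(m-j) * H j) * of_real (Phi (m-j) l)) {0..pi}"
      by (rule has_integral_mult_right)
    moreover have "(\<lambda>x. G x j * H j) = (\<lambda>x. (of_nat (m choose j) * w$3^(m-j) * H j) * of_real (sin x * sin x ^ (2*l) * cos x ^ (m-j)))"
      unfolding G_def l by (rule ext) (simp add: power_mult_distrib mult_ac)
    moreover have "T j = (of_nat (m choose j) * w$3^(m-j) * H j) * of_real (Phi (m-j) l)"
      unfolding T_def l by simp
    ultimately show ?thesis by (simp only:)
  next
    case False
    then have "H j = 0" unfolding H_def by simp
    then show ?thesis unfolding T_def by simp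
  qed
  have 3: "integral (cbox 0 pi) (\<lambda>x. integral (cbox 0 (2*pi)) (\<lambda>y. F (x,y))) = (\<Sum>j\<le>m. T j)"
  proof -
    have "((\<lambda>x. \<Sum>j\<le>m. G x j * H j) has_integral (\<Sum>j\<le>m. T j)) {0..pi}"
      by (intro has_integral_sum outer) auto
    then show ?thesis unfolding inner by (simp add: integral_unique)
  qed
  have 4: "(\<Sum>j\<le>m. T j) = (\<Sum>l\<le>n. T (2*l))"
  proof -
    have "\<And>l. T (2*l+1) = 0" unfolding T_def H_def by simp
    then show ?thesis unfolding m_def sum_even_odd by simp
  qed
  have 5: "T (2*l) = of_real (4*pi/(2*real n+1)) * (of_nat (n choose l) * lam^l * (w$3^2)^(n-l))" if "l \<le> n" for l
  proof -
    have ph: "Phi (2*(n-l)) l = 2 * Ssum (n-l) l"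
      unfolding Phi_def Ssum_def sum_distrib_left
    proof (rule sum.cong[OF refl])
      fix s assume "s \<in> {..l}"
      have ev: "(-1::real)^(2*(n-l) + 2 * s) = 1" by (simp add: even_add)
      have r: "real (2*(n-l) + 2 * s) + 1 = 2 * real (n-l) + 2 * real s + 1" by simp
      show "real (l choose s) * (-1)^s * ((1 + (-1)^(2*(n-l) + 2 * s)) / (real (2*(n-l) + 2 * s) + 1)) =
          2 * (real (l choose s) * ((-1)^s / (2 * real (n-l) + 2 * real s + 1)))"
        unfolding ev r by simp
    qed
    have H2: "H (2*l) = of_real (2*pi) * of_nat (2*l choose l) * (lam/4)^l"
      unfolding H_def lam_def by simp
    have m2: "m - 2*l = 2*(n-l)" unfolding m_def using that by simp
    have T2: "T (2*l) = of_nat (m choose (2*l)) * w$3^(m-2*l) * H (2*l) * of_real (Phi (m-2*l) l)"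
      unfolding T_def by simp
    have "T (2*l) = of_real (2*pi * (real (2*n choose 2*l) * real (2*l choose l) / 4^l * (2 * Sclosed (n-l) l))) * (lam^l * w$3^(2*(n-l)))"
      unfolding T2 H2 ph m2 Ssum_closed by (simp add: m_def power_divide field_simps)
    also have "\<dots> = of_real (4*pi/(2*real n+1)) * (of_nat (n choose l) * lam^l * (w$3^2)^(n-l))"
    proof -
      have pw: "w$3^(2*(n-l)) = (w$3^2)^(n-l)" by (simp add: power_mult)
      show ?thesis unfolding coef_identity[OF that] pw by (simp add: field_simps)
    qed
    finally show ?thesis .
  qed
  have 6: "(\<Sum>l\<le>n. T (2*l)) = of_real (4*pi/(2*real n+1)) * bil w w ^ n"
  proof -
    have "(\<Sum>l\<le>n. T (2*l)) = of_real (4*pi/(2*real n+1)) * (\<Sum>l\<le>n. of_nat (n choose l) * lam^l * (w$3^2)^(n-l))"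
      unfolding sum_distrib_left by (rule sum.cong[OF refl]) (simp add: 5)
    also have "(\<Sum>l\<le>n. of_nat (n choose l) * lam^l * (w$3^2)^(n-l)) = (lam + w$3^2)^n"
      by (rule binomial_ring[symmetric])
    also have "lam + w$3^2 = bil w w" unfolding lam_def bil_def by (simp add: power2_eq_square)
    finally show ?thesis .
  qed
  show ?thesis using 1 2 3 4 6 unfolding m_def by simp
qed



lemma integrable_lin:
  "(\<lambda>p. of_real (sin (fst p)) * (lin a (sph (fst p) (snd p)) ^ i * lin c (sph (fst p) (snd p)) ^ j)) integrable_on cbox (0,0) (pi,2*pi)"
  unfolding lin_sph by (rule integrable_continuous) (intro continuous_intros)

lemma binom_integral:
  fixes t :: complex
  shows "sphere_integral (\<lambda>y. (t * lin a y + lin c y) ^ m) =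
    (\<Sum>j\<le>m. (of_nat (m choose j) * t^j) * sphere_integral (\<lambda>y. lin a y ^ j * lin c y ^ (m-j)))"
proof -
  have e: "of_real (sin p) * (t * lin a y + lin c y) ^ m =
    (\<Sum>j\<le>m. (of_nat (m choose j) * t^j) * (of_real (sin p) * (lin a y ^ j * lin c y ^ (m-j))))" for p y
    unfolding binomial_ring sum_distrib_left by (rule sum.cong[OF refl]) (simp add: power_mult_distrib mult_ac)
  show ?thesis
    unfolding sphere_integral_def e
    by (subst integral_sum) (auto intro!: integrable_on_mult_right integrable_lin)
qed

lemma null_integral:
  assumes "bil a a = 0" "bil c c = 0"
  shows "sphere_integral (\<lambda>y. lin a y ^ k * lin c y ^ k) = of_real (4*pi * 2^k * (fact k)^2 / fact (2*k+1)) * bil a c ^ k"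
proof -
  define I where "I j = sphere_integral (\<lambda>y. lin a y ^ j * lin c y ^ (2*k-j))" for j
  define B where "B = bil a c"
  define cc where "cc j = of_nat (2*k choose j) * I j" for j
  define dd where "dd j = (if j = k then of_real (4*pi/(2*real k+1)) * (2*B)^k else 0)" for j
  have "(\<Sum>j\<le>2*k. cc j * t^j) = (\<Sum>j\<le>2*k. dd j * t^j)" for t :: complex
  proof -
    define w where "w = (\<chi> i. t * a$i + c$i)"
    have lw: "lin w y = t * lin a y + lin c y" for y unfolding w_def lin_def by (simp add: algebra_simps)
    have "bil w w = t^2 * bil a a + t * (2 * bil a c) + bil c c"
      unfolding w_def bil_def by (simp add: algebra_simps power2_eq_square)
    then have bw: "bil w w = t * (2 * B)" using assms unfolding B_def by simp
    have "(\<Sum>j\<le>2*k. cc j * t^j) = sphere_integral (\<lambda>y. lin w y ^ (2*k))"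
      unfolding lw binom_integral cc_def I_def by (rule sum.cong[OF refl]) simp
    also have "\<dots> = of_real (4*pi/(2*real k+1)) * (2*B)^k * t^k"
      unfolding power_integral bw by (simp add: power_mult_distrib)
    also have "\<dots> = (\<Sum>j\<le>2*k. if j = k then of_real (4*pi/(2*real k+1)) * (2*B)^k * t^j else 0)"
      by simp
    also have "\<dots> = (\<Sum>j\<le>2*k. dd j * t^j)"
      unfolding dd_def by (rule sum.cong) auto
    finally show ?thesis .
  qed
  then have "cc k = dd k" using polyfun_eq_coeffs[of cc "2*k" dd] by auto
  then have eq: "of_nat (2*k choose k) * I k = of_real (4*pi/(2*real k+1)) * (2*B)^k"
    unfolding cc_def dd_def by simp
  have bf: "real (2*k choose k) = fact (2*k) / (fact k * fact k)"
    using binomial_fact[of k "2*k", where 'a=real] by (simp add: mult_2)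
  have f: "fact (2*k+1) = (2*real k+1) * (fact (2*k) :: real)"
    by (simp add: fact_Suc algebra_simps)
  have pos: "(fact (2*k)::real) > 0" "(fact k::real) > 0" by auto
  define N where "N = 2*real k+1"
  have N: "N > 0" unfolding N_def by simp
  have "I k = of_real (4*pi/(2*real k+1) / real (2*k choose k)) * (2*B)^k"
  proof -
    have nz: "(of_nat (2*k choose k) :: complex) \<noteq> 0" by simp
    have "I k = (of_nat (2*k choose k) * I k) / of_nat (2*k choose k)" using nz by simp
    then have "I k = of_real (4*pi/(2*real k+1)) * (2*B)^k / of_nat (2*k choose k)"
      unfolding eq .
    then show ?thesis by (simp add: of_real_divide)
  qed
  also have "4*pi/(2*real k+1) / real (2*k choose k) = 4*pi * (fact k)^2 / fact (2*k+1)"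
    unfolding bf f N_def[symmetric] using pos N by (simp add: field_simps power2_eq_square)
  finally show ?thesis unfolding I_def B_def by (simp add: power_mult_distrib mult_ac)
qed



lemma deriv_poly_fun: "deriv (poly p) = poly (pderiv (p :: real poly))"
proof (rule ext)
  fix x
  show "deriv (poly p) x = poly (pderiv p) x"
    by (rule DERIV_imp_deriv) (use poly_DERIV[of p x] in simp)
qed

lemma iter_deriv_poly: "(deriv ^^ n) (poly p) = poly ((pderiv ^^ n) (p :: real poly))"
  by (induction n) (simp_all add: deriv_poly_fun)

definition Lk :: "nat \<Rightarrow> real" where "Lk k = (deriv ^^ k) (legendreP k) 0"

lemma legendre_top: "(deriv ^^ k) (legendreP k) t = Lk k \<and> Lk k \<noteq> 0"
proof -
  define p :: "real poly" where "p = [:-1,0,1:] ^ k"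
  define c :: real where "c = 1 / (2^k * fact k)"
  have e1: "(\<lambda>s. (s^2 - 1)^k) = poly p"
    unfolding p_def by (rule ext) (simp add: power2_eq_square algebra_simps)
  have e2: "legendreP k = poly (smult c ((pderiv ^^ k) p))"
    unfolding legendreP_def[abs_def] e1 iter_deriv_poly c_def by (rule ext) simp
  define q where "q = (pderiv ^^ (2*k)) p"
  have e3: "(deriv ^^ k) (legendreP k) = poly (smult c q)"
    unfolding e2 iter_deriv_poly q_def higher_pderiv_smult
    by (simp add: mult_2 funpow_add)
  have dp: "degree p = 2*k"
    unfolding p_def by (subst degree_power_eq) auto
  have lp: "coeff p (2*k) = 1"
    using lead_coeff_power[of "[:-1,0,1:] :: real poly" k] dp unfolding p_def by simp
  have dq: "degree q = 0" unfolding q_def degree_higher_pderiv dp by simp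
  have cq: "coeff q 0 = fact (2*k)"
    unfolding q_def coeff_higher_pderiv using lp by (simp add: pochhammer_fact)
  obtain a where qa: "q = pCons a 0" using degree_eq_zeroE[OF dq] by blast
  have "a = fact (2*k)" using cq qa by simp
  then have val: "(deriv ^^ k) (legendreP k) s = c * fact (2*k)" for s
    unfolding e3 qa by simp
  have "c \<noteq> 0" unfolding c_def by simp
  then show ?thesis using val[of t] val[of 0] unfolding Lk_def by simp
qed

definition Dk :: "nat \<Rightarrow> real" where "Dk k = (-1)^k * Lk k"

lemma Dk_nz: "Dk k \<noteq> 0" unfolding Dk_def using legendre_top by simp

lemma norm3: "norm (z :: real^3) ^ 2 = z$1^2 + z$2^2 + z$3^2"
  by (simp only: power2_norm_eq_inner) (simp add: inner_vec_def sum_3 power2_eq_square)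

lemma cmod_pow_cis: "complex_of_real (cmod w ^ k) * cis (real k * Arg w) = w ^ k"
proof -
  have "w ^ k = rcis (cmod w) (Arg w) ^ k" by (simp add: rcis_cmod_Arg)
  also have "\<dots> = rcis (cmod w ^ k) (real k * Arg w)" by (rule DeMoivre2)
  finally show ?thesis by (simp add: rcis_def)
qed

lemma Qraw_sphere:
  assumes "norm z = 1"
  shows "Qraw k z = of_real (Dk k) * Complex (z$1) (z$2) ^ k"
proof -
  have n: "z$1^2 + z$2^2 + z$3^2 = 1" using norm3[of z] assms by simp
  have "sqrt (1 - (z$3)^2) = cmod (Complex (z$1) (z$2))"
    using n by (simp add: cmod_def)
  then have "assoc_legendreP k k (z$3) = Dk k * cmod (Complex (z$1) (z$2)) ^ k"
    unfolding assoc_legendreP_def Dk_def using legendre_top[of k "z$3"] by simp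
  then show ?thesis unfolding Qraw_def
    using cmod_pow_cis[of "Complex (z$1) (z$2)" k] by (simp add: mult.assoc)
qed



definition rowc :: "real^3^3 \<Rightarrow> complex^3" where
  "rowc R = (\<chi> j. Complex (R$1$j) (R$2$j))"

definition cnjv :: "complex^3 \<Rightarrow> complex^3" where
  "cnjv a = (\<chi> j. cnj (a$j))"

lemma lin_rowc: "lin (rowc R) y = Complex ((R *v y)$1) ((R *v y)$2)"
  by (simp add: lin_def rowc_def matrix_vector_mult_def sum_3 complex_eq_iff)

lemma cnj_lin: "cnj (lin a y) = lin (cnjv a) y"
  by (simp add: lin_def cnjv_def)

lemma bil_cnjv: "bil (cnjv a) (cnjv b) = cnj (bil a b)"
  by (simp add: bil_def cnjv_def)

lemma bil_rowc_self:
  assumes "orthogonal_matrix R"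
  shows "bil (rowc R) (rowc R) = 0"
proof -
  have M: "R ** transpose R = mat 1" using assms unfolding orthogonal_matrix_def by simp
  have e11: "R$1$1 * R$1$1 + R$1$2 * R$1$2 + R$1$3 * R$1$3 = 1"
    using arg_cong[OF M, of "\<lambda>M. M$1$1"] by (simp add: matrix_matrix_mult_def transpose_def mat_def sum_3)
  have e22: "R$2$1 * R$2$1 + R$2$2 * R$2$2 + R$2$3 * R$2$3 = 1"
    using arg_cong[OF M, of "\<lambda>M. M$2$2"] by (simp add: matrix_matrix_mult_def transpose_def mat_def sum_3)
  have e12: "R$1$1 * R$2$1 + R$1$2 * R$2$2 + R$1$3 * R$2$3 = 0"
    using arg_cong[OF M, of "\<lambda>M. M$1$2"] by (simp add: matrix_matrix_mult_def transpose_def mat_def sum_3)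
  show ?thesis unfolding bil_def rowc_def complex_eq_iff
    using e11 e22 e12 by (simp add: algebra_simps)
qed

lemma lagrange3: "(cross3 (a::real^3) b) \<bullet> (cross3 c d) = (a \<bullet> c) * (b \<bullet> d) - (a \<bullet> d) * (b \<bullet> c)"
  by (simp add: cross3_def inner_vec_def sum_3 algebra_simps)

lemma frame:
  assumes R: "rotation_matrix R" and Rx: "R *v x = north_pole" and y: "norm y = 1" "x \<bullet> y = 0"
  shows "rowc R = (\<chi> j. Complex ((R*v y)$1) ((R*v y)$2) * Complex (y$j) ((cross3 x y)$j))"
    and "((R*v y)$1)^2 + ((R*v y)$2)^2 = 1"
proof -
  have OM: "orthogonal_matrix R" using R unfolding rotation_matrix_def by simp
  have OT: "orthogonal_transformation (\<lambda>v. R *v v)"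
    using OM by (simp add: orthogonal_transformation_matrix matrix_vector_mul_linear)
  define p where "p = (R*v y)$1"
  define s where "s = (R*v y)$2"
  have "(R *v y) \<bullet> (R *v x) = y \<bullet> x" using OT unfolding orthogonal_transformation_def by blast
  then have y3: "(R*v y)$3 = 0" using Rx y by (simp add: north_pole_def inner_vec_def sum_3 mult.commute)
  have "norm (R *v y) = 1" using OT y orthogonal_transformation_norm by metis
  then show ps: "((R*v y)$1)^2 + ((R*v y)$2)^2 = 1" using norm3[of "R *v y"] y3 by simp
  define w where "w = cross3 x y"
  have Rw: "R *v w = cross3 north_pole (R *v y)"
    unfolding w_def using cross_rotation_matrix[OF R, of x y] Rx by simp
  have Rw1: "(R *v w)$1 = - s" and Rw2: "(R *v w)$2 = p" and Rw3: "(R *v w)$3 = 0"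
    unfolding Rw by (simp_all add: cross3_def north_pole_def p_def s_def)
  have TR: "transpose R ** R = mat 1" using OM orthogonal_matrix by blast
  have bk: "v = transpose R *v (R *v v)" for v
    by (simp add: matrix_vector_mul_assoc TR)
  have comp: "(transpose R *v z)$j = R$1$j * z$1 + R$2$j * z$2 + R$3$j * z$3" for z j
    by (simp add: matrix_vector_mult_def transpose_def sum_3)
  have lin_comp: "(R *v (a *\<^sub>R u + b *\<^sub>R v))$i = a * (R *v u)$i + b * (R *v v)$i" for a b u v i
    by (simp add: matrix_vector_mult_def sum_3 algebra_simps)
  define v1 where "v1 = p *\<^sub>R y + (- s) *\<^sub>R w"
  define v2 where "v2 = s *\<^sub>R y + p *\<^sub>R w"
  have pp: "p^2 + s^2 = 1" using ps unfolding p_def s_def .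
  have r1: "(R *v v1)$1 = 1" "(R *v v1)$2 = 0" "(R *v v1)$3 = 0"
    unfolding v1_def lin_comp Rw1 Rw2 Rw3 using y3 pp
    by (simp_all add: p_def[symmetric] s_def[symmetric] power2_eq_square algebra_simps)
  have r2: "(R *v v2)$1 = 0" "(R *v v2)$2 = 1" "(R *v v2)$3 = 0"
    unfolding v2_def lin_comp Rw1 Rw2 Rw3 using y3 pp
    by (simp_all add: p_def[symmetric] s_def[symmetric] power2_eq_square algebra_simps)
  have "v1$j = R$1$j" for j using bk[of v1] comp[of "R *v v1" j] r1 by simp
  moreover have "v2$j = R$2$j" for j using bk[of v2] comp[of "R *v v2" j] r2 by simp
  ultimately show "rowc R = (\<chi> j. Complex ((R*v y)$1) ((R*v y)$2) * Complex (y$j) ((cross3 x y)$j))"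
    unfolding rowc_def vec_eq_iff p_def[symmetric] s_def[symmetric] w_def[symmetric]
    by (auto simp: v1_def v2_def complex_eq_iff algebra_simps)
qed

lemma lin_frame: "lin (\<chi> j. z * Complex (y$j) (w$j)) v = z * Complex (y \<bullet> v) (w \<bullet> v)"
  by (simp add: lin_def inner_vec_def sum_3 complex_eq_iff algebra_simps)

lemma bil_frame: "bil (\<chi> j. z1 * Complex (y$j) (w1$j)) (cnjv (\<chi> j. z2 * Complex (y$j) (w2$j))) =
   z1 * cnj z2 * Complex (y \<bullet> y + w1 \<bullet> w2) (w1 \<bullet> y - y \<bullet> w2)"
  by (simp add: bil_def cnjv_def inner_vec_def sum_3 complex_eq_iff algebra_simps)



lemma norm_sph: "norm (sph p t) = 1"
proof -
  have "norm (sph p t) ^ 2 = 1"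
    unfolding norm3 by (simp add: sph_def power_mult_distrib sin_squared_eq algebra_simps)
  then show ?thesis by (simp add: power2_eq_1_iff) (smt (verit) norm_ge_zero)
qed

lemma sphere_integral_cong:
  assumes "\<And>y. norm y = 1 \<Longrightarrow> f y = g y"
  shows "sphere_integral f = sphere_integral g"
  unfolding sphere_integral_def using assms norm_sph by simp

lemma sphere_integral_cmult: "sphere_integral (\<lambda>y. c * f y) = c * sphere_integral f"
  unfolding sphere_integral_def by (simp add: mult.left_commute)

definition kap :: "nat \<Rightarrow> real" where "kap k = 4*pi * 2^k * (fact k)^2 / fact (2*k+1)"

lemma kap_pos: "kap k > 0" unfolding kap_def by simp

lemma null_integral': "bil a a = 0 \<Longrightarrow> bil c c = 0 \<Longrightarrow>
  sphere_integral (\<lambda>y. lin a y ^ k * lin c y ^ k) = of_real (kap k) * bil a c ^ k"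
  unfolding kap_def by (rule null_integral)

lemma normalization: "Cnorm k ^ 2 * (Dk k ^ 2 * kap k * 2^k) = 1"
proof -
  define e :: "complex^3" where "e = vector [1, \<i>, 0]"
  have le: "lin e y = Complex (y$1) (y$2)" for y by (simp add: e_def lin_def complex_eq_iff)
  have "sphere_inner (Qraw k) (Qraw k) = sphere_integral (\<lambda>y. of_real (Dk k ^ 2) * (lin e y ^ k * lin (cnjv e) y ^ k))"
    unfolding sphere_inner_def
    by (rule sphere_integral_cong) (simp add: Qraw_sphere le[symmetric] cnj_lin[symmetric] power2_eq_square mult_ac)
  also have "\<dots> = of_real (Dk k ^ 2 * kap k * 2^k)"
  proof -
    have "bil e e = 0" "bil (cnjv e) (cnjv e) = 0" "bil e (cnjv e) = 2"
      by (simp_all add: e_def bil_def cnjv_def)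
    then show ?thesis unfolding sphere_integral_cmult
      by (subst null_integral') auto
  qed
  finally have "Re (sphere_inner (Qraw k) (Qraw k)) = Dk k ^ 2 * kap k * 2^k" by simp
  moreover have "Dk k ^ 2 * kap k * 2^k > 0" using Dk_nz kap_pos by simp
  ultimately show ?thesis unfolding Cnorm_def using Dk_nz kap_pos[of k] by (simp add: power_divide)
qed

lemma beam_form:
  assumes "gaussian_beam k x q"
  obtains c R where "rotation_matrix R" "R *v x = north_pole"
    "\<And>y. y \<in> sphere 0 1 \<Longrightarrow> q y = cis c * of_real (Cnorm k * Dk k) * lin (rowc R) y ^ k"
proof -
  obtain c R where R: "rotation3 R" "R *v x = north_pole" and q: "\<forall>y\<in>sphere 0 1. q y = cis c * Qstd k (R *v y)"
    using assms unfolding gaussian_beam_def by blast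
  have RM: "rotation_matrix R" using R unfolding rotation3_def rotation_matrix_def by simp
  have OT: "orthogonal_transformation (\<lambda>v. R *v v)"
    using RM by (simp add: rotation_matrix_def orthogonal_transformation_matrix matrix_vector_mul_linear)
  have "q y = cis c * of_real (Cnorm k * Dk k) * lin (rowc R) y ^ k" if "y \<in> sphere 0 1" for y
  proof -
    have "norm (R *v y) = 1" using that OT orthogonal_transformation_norm by (metis mem_sphere_0)
    then show ?thesis using q that unfolding Qstd_def
      by (simp add: Qraw_sphere lin_rowc mult_ac)
  qed
  then show ?thesis using that RM R(2) by blast
qed



lemma exists_perp:
  fixes x1 x2 :: "real^3"
  obtains y where "norm y = 1" "x1 \<bullet> y = 0" "x2 \<bullet> y = 0"
proof -
  have "dim {x1, x2} \<le> card {x1, x2}" by (rule dim_le_card) (auto intro: span_base)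
  also have "\<dots> \<le> 2" by (simp add: card_insert_le_m1)
  finally have "dim {x1, x2} < DIM(real^3)" by simp
  then obtain z where z: "z \<noteq> 0" "\<And>y. y \<in> span {x1, x2} \<Longrightarrow> orthogonal z y"
    by (rule orthogonal_to_subspace_exists) blast
  have "orthogonal z x1" "orthogonal z x2" by (rule z(2), rule span_base, simp)+
  then have "x1 \<bullet> z = 0" "x2 \<bullet> z = 0" unfolding orthogonal_def by (simp_all add: inner_commute)
  then show ?thesis using that[of "z /\<^sub>R norm z"] z(1) by (simp add: inner_commute)
qed

lemma cmod_frame: "p^2 + s^2 = 1 \<Longrightarrow> Complex p s * cnj (Complex p s) = 1"
  by (simp add: complex_eq_iff power2_eq_square)

lemma cos_half_arccos:
  assumes "-1 \<le> C" "C \<le> 1"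
  shows "cos (arccos C / 2) ^ (2*k) = ((1 + C) / 2) ^ k"
proof -
  have "cos (arccos C) = 2 * cos (arccos C / 2) ^ 2 - 1"
    using cos_double_cos[of "arccos C / 2"] by simp
  then have h: "cos (arccos C / 2) ^ 2 = (1 + C) / 2" using cos_arccos[OF assms] by simp
  have "cos (arccos C / 2) ^ (2*k) = (cos (arccos C / 2) ^ 2) ^ k" by (simp add: power_mult)
  then show ?thesis unfolding h .
qed



lemma cnj_unit: "z * cnj z = 1 \<Longrightarrow> cmod z = 1"
proof -
  assume "z * cnj z = 1"
  then have "complex_of_real (cmod z ^ 2) = 1" using complex_norm_square[of z] by simp
  then have "cmod z ^ 2 = 1" by (metis of_real_eq_1_iff)
  then show "cmod z = 1" by (simp add: power2_eq_1_iff) (smt (verit) norm_ge_zero)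
qed

theorem lemma2p3:
  fixes k :: nat and x1 x2 :: "real^3" and q1 q2 :: "real^3 \<Rightarrow> complex" and \<beta> :: real
  assumes "k \<ge> 1"
    and "x1 \<in> sphere 0 1" and "x2 \<in> sphere 0 1"
    and "gaussian_beam k x1 q1" and "gaussian_beam k x2 q2"
    and "\<beta> = arccos (x1 \<bullet> x2)"
  shows "\<exists>\<alpha>. -pi / real k \<le> \<alpha> \<and> \<alpha> < pi / real k \<and>
           sphere_inner q1 q2 = cis (real k * \<alpha>) * complex_of_real ((cos (\<beta> / 2)) ^ (2 * k)) \<and>
           (x1 \<noteq> x2 \<and> x1 \<noteq> - x2 \<longrightarrow>
              (\<forall>y\<in>sphere 0 1. y \<bullet> x1 = 0 \<and> y \<bullet> x2 = 0 \<longrightarrow>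
                  q2 y \<noteq> 0 \<and> cis (real k * \<alpha>) = q1 y / q2 y)) \<and>
           (x1 = x2 \<longrightarrow>
              (\<forall>y\<in>sphere 0 1. q2 y \<noteq> 0 \<longrightarrow> cis (real k * \<alpha>) = q1 y / q2 y))"
proof -
  define A where "A = Cnorm k * Dk k"
  obtain c1 R1 where R1: "rotation_matrix R1" "R1 *v x1 = north_pole"
    and q1: "\<And>y. y \<in> sphere 0 1 \<Longrightarrow> q1 y = cis c1 * of_real A * lin (rowc R1) y ^ k"
    using beam_form[OF assms(4)] unfolding A_def by blast
  obtain c2 R2 where R2: "rotation_matrix R2" "R2 *v x2 = north_pole"
    and q2: "\<And>y. y \<in> sphere 0 1 \<Longrightarrow> q2 y = cis c2 * of_real A * lin (rowc R2) y ^ k"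
    using beam_form[OF assms(5)] unfolding A_def by blast
  have A2: "A^2 * (kap k * 2^k) = 1" using normalization[of k] unfolding A_def by (simp add: power_mult_distrib mult_ac)
  then have Anz: "A \<noteq> 0" by auto
  define a1 where "a1 = rowc R1"
  define a2 where "a2 = rowc R2"
  define C where "C = x1 \<bullet> x2"
  have n1: "norm x1 = 1" and n2: "norm x2 = 1" using assms(2,3) by auto
  have Cb: "\<bar>C\<bar> \<le> 1" unfolding C_def using Cauchy_Schwarz_ineq2[of x1 x2] n1 n2 by simp
  have fr: "a = (\<chi> j. Complex ((R *v y)$1) ((R *v y)$2) * Complex (y$j) ((cross3 x y)$j)) \<and>
            Complex ((R *v y)$1) ((R *v y)$2) * cnj (Complex ((R *v y)$1) ((R *v y)$2)) = 1 \<and>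
            lin a y = Complex ((R *v y)$1) ((R *v y)$2)"
    if "rotation_matrix R" "R *v x = north_pole" "norm y = 1" "x \<bullet> y = 0" "a = rowc R" for R x y a
  proof -
    note F = frame[OF that(1-4)]
    have "lin a y = Complex ((R *v y)$1) ((R *v y)$2) * Complex (y \<bullet> y) (cross3 x y \<bullet> y)"
      unfolding that(5) F(1) lin_frame ..
    moreover have "y \<bullet> y = 1" using that(3) by (simp add: inner_commute norm_eq_1)
    moreover have "cross3 x y \<bullet> y = 0" by (simp add: cross3_def inner_vec_def sum_3 algebra_simps)
    ultimately show ?thesis using F that(5) cmod_frame by (simp add: one_complex.ctr)
  qed
  have bilfr: "bil (\<chi> j. z1 * Complex (y$j) ((cross3 x1 y)$j)) (cnjv (\<chi> j. z2 * Complex (y$j) ((cross3 x2 y)$j)))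
      = z1 * cnj z2 * of_real (1 + C)" if "norm y = 1" "x1 \<bullet> y = 0" "x2 \<bullet> y = 0" for y z1 z2
  proof -
    have "y \<bullet> y = 1" using that(1) by (simp add: norm_eq_1)
    moreover have "cross3 x1 y \<bullet> cross3 x2 y = C" unfolding lagrange3 C_def using that
      by (simp add: inner_commute \<open>y \<bullet> y = 1\<close>)
    moreover have "cross3 x1 y \<bullet> y = 0" "y \<bullet> cross3 x2 y = 0"
      by (simp_all add: cross3_def inner_vec_def sum_3 algebra_simps)
    ultimately show ?thesis unfolding bil_frame by (simp add: complex_eq_iff)
  qed
  obtain y0 where y0: "norm y0 = 1" "x1 \<bullet> y0 = 0" "x2 \<bullet> y0 = 0" using exists_perp by blast
  define z1 where "z1 = Complex ((R1 *v y0)$1) ((R1 *v y0)$2)"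
  define z2 where "z2 = Complex ((R2 *v y0)$1) ((R2 *v y0)$2)"
  have f1: "a1 = (\<chi> j. z1 * Complex (y0$j) ((cross3 x1 y0)$j))" "z1 * cnj z1 = 1"
    using fr[OF R1 y0(1,2) a1_def] unfolding z1_def by auto
  have f2: "a2 = (\<chi> j. z2 * Complex (y0$j) ((cross3 x2 y0)$j))" "z2 * cnj z2 = 1"
    using fr[OF R2 y0(1,3) a2_def] unfolding z2_def by auto
  define Z where "Z = z1 * cnj z2"
  define P where "P = cis (c1 - c2) * Z ^ k"
  have bil12: "bil a1 (cnjv a2) = Z * of_real (1 + C)"
    unfolding f1(1) f2(1) Z_def using bilfr[OF y0] .
  have null1: "bil a1 a1 = 0" unfolding a1_def using R1(1) bil_rowc_self rotation_matrix_def by blast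
  have null2: "bil (cnjv a2) (cnjv a2) = 0" unfolding bil_cnjv a2_def using R2(1) bil_rowc_self rotation_matrix_def by (metis complex_cnj_zero)
  have inner: "sphere_inner q1 q2 = P * of_real (((1 + C) / 2) ^ k)"
  proof -
    have "sphere_inner q1 q2 = sphere_integral (\<lambda>y. (cis c1 * cnj (cis c2) * of_real (A^2)) * (lin a1 y ^ k * lin (cnjv a2) y ^ k))"
      unfolding sphere_inner_def
    proof (rule sphere_integral_cong)
      fix y :: "real^3" assume "norm y = 1"
      then have "y \<in> sphere 0 1" by simp
      then show "q1 y * cnj (q2 y) = (cis c1 * cnj (cis c2) * of_real (A^2)) * (lin a1 y ^ k * lin (cnjv a2) y ^ k)"
        unfolding q1[OF \<open>y \<in> sphere 0 1\<close>] q2[OF \<open>y \<in> sphere 0 1\<close>] a1_def a2_def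
        by (simp add: cnj_lin[symmetric] power2_eq_square mult_ac)
    qed
    also have "\<dots> = (cis c1 * cnj (cis c2) * of_real (A^2)) * (of_real (kap k) * (Z * of_real (1 + C)) ^ k)"
      unfolding sphere_integral_cmult null_integral'[OF null1 null2] bil12 ..
    also have "\<dots> = cis (c1 - c2) * Z^k * of_real (A^2 * (kap k * 2^k) * ((1 + C) / 2) ^ k)"
      by (simp add: cis_cnj cis_mult power_mult_distrib power_divide mult_ac)
    also have "\<dots> = P * of_real (((1 + C) / 2) ^ k)" unfolding A2 P_def by simp
    finally show ?thesis .
  qed
  have cosb: "cos (\<beta> / 2) ^ (2 * k) = ((1 + C) / 2) ^ k"
    unfolding assms(6) C_def[symmetric] using Cb by (intro cos_half_arccos) auto
  have cz1: "cmod z1 = 1" using f1(2) by (rule cnj_unit)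
  have cz2: "cmod z2 = 1" using f2(2) by (rule cnj_unit)
  have cP: "cmod P = 1" unfolding P_def Z_def by (simp add: norm_mult norm_power cz1 cz2)
  define th where "th = Arg P"
  have Pth: "P = cis th" using rcis_cmod_Arg[of P] unfolding cP th_def by (simp add: rcis_def)
  have thb: "-pi < th" "th \<le> pi" unfolding th_def using Arg_bounded by auto
  define \<alpha> where "\<alpha> = (if th = pi then -pi else th) / real k"
  have kpos: "real k > 0" using assms(1) by simp
  have tb: "-pi \<le> (if th = pi then -pi else th)" "(if th = pi then -pi else th) < pi" using thb by auto
  have ab: "-pi / real k \<le> \<alpha>" "\<alpha> < pi / real k"
    unfolding \<alpha>_def using divide_right_mono[OF tb(1), of "real k"] divide_strict_right_mono[OF tb(2) kpos] kpos by auto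
  have cisa: "cis (real k * \<alpha>) = P"
  proof -
    have "real k * \<alpha> = (if th = pi then -pi else th)" unfolding \<alpha>_def using kpos by simp
    then show ?thesis unfolding Pth by (auto simp: cis.ctr complex_eq_iff)
  qed
  have ratio: "q1 y / q2 y = cis (c1 - c2) * (w1 * cnj w2) ^ k \<and> q2 y \<noteq> 0"
    if "y \<in> sphere 0 1" "lin a1 y = w1 * W" "lin a2 y = w2 * W" "w2 * cnj w2 = 1" "W \<noteq> 0" for y w1 w2 W
  proof -
    have w2nz: "w2 \<noteq> 0" using that(4) by auto
    have q2nz: "q2 y \<noteq> 0" unfolding q2[OF that(1)] a2_def[symmetric] that(3) using Anz w2nz that(5) by simp
    have Ynz: "(w2 * W) ^ k \<noteq> 0" using w2nz that(5) by simp
    have cnz: "cis c2 \<noteq> 0" by simp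
    have Anz': "(of_real A :: complex) \<noteq> 0" using Anz by simp
    have "q1 y / q2 y = (cis c1 * of_real A * (w1 * W) ^ k) / (cis c2 * of_real A * (w2 * W) ^ k)"
      unfolding q1[OF that(1)] q2[OF that(1)] a1_def[symmetric] a2_def[symmetric] that(2,3) ..
    also have "\<dots> = (cis c1 / cis c2) * ((w1 * W) / (w2 * W)) ^ k"
      using Ynz cnz Anz' by (simp add: power_divide field_simps)
    also have "(w1 * W) / (w2 * W) = w1 * cnj w2"
      using that(4,5) w2nz by (simp add: field_simps)
    finally show ?thesis using Anz q2nz by (simp add: cis_divide)
  qed
  show ?thesis
  proof (intro exI conjI impI ballI)
    show "-pi / real k \<le> \<alpha>" "\<alpha> < pi / real k" by (rule ab(1), rule ab(2))
    show "sphere_inner q1 q2 = cis (real k * \<alpha>) * complex_of_real ((cos (\<beta> / 2)) ^ (2 * k))"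
      unfolding inner cisa cosb ..
  next
    fix y assume ne: "x1 \<noteq> x2 \<and> x1 \<noteq> - x2" and y: "y \<in> sphere 0 1" and yo: "y \<bullet> x1 = 0 \<and> y \<bullet> x2 = 0"
    have ny: "norm y = 1" using y by simp
    have o1: "x1 \<bullet> y = 0" and o2: "x2 \<bullet> y = 0" using yo by (simp_all add: inner_commute)
    define u1 where "u1 = Complex ((R1 *v y)$1) ((R1 *v y)$2)"
    define u2 where "u2 = Complex ((R2 *v y)$1) ((R2 *v y)$2)"
    have g1: "a1 = (\<chi> j. u1 * Complex (y$j) ((cross3 x1 y)$j))" "lin a1 y = u1"
      using fr[OF R1 ny o1 a1_def] unfolding u1_def by auto
    have g2: "a2 = (\<chi> j. u2 * Complex (y$j) ((cross3 x2 y)$j))" "lin a2 y = u2" "u2 * cnj u2 = 1"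
      using fr[OF R2 ny o2 a2_def] unfolding u2_def by auto
    have "bil a1 (cnjv a2) = u1 * cnj u2 * of_real (1 + C)"
      unfolding g1(1) g2(1) using bilfr[OF ny o1 o2] .
    moreover have "1 + C \<noteq> 0"
    proof
      assume "1 + C = 0"
      then have "norm (x1 + x2) ^ 2 = 0"
        unfolding power2_norm_eq_inner using n1 n2
        by (simp add: inner_add C_def inner_commute norm_eq_1)
      then have "x1 = - x2" by (simp add: add_eq_0_iff2)
      with ne show False by simp
    qed
    then have "1 + complex_of_real C \<noteq> 0" by (metis of_real_1 of_real_add of_real_eq_0_iff)
    ultimately have "u1 * cnj u2 = Z" using bil12 by simp
    moreover have "lin a1 y = u1 * 1" "lin a2 y = u2 * 1" using g1 g2 by simp_all
    note r = ratio[OF y this g2(3)]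
    show "q2 y \<noteq> 0" using r by simp
    show "cis (real k * \<alpha>) = q1 y / q2 y" using r \<open>u1 * cnj u2 = Z\<close> cisa unfolding P_def by simp
  next
    fix y assume e: "x1 = x2" and y: "y \<in> sphere 0 1" and nz: "q2 y \<noteq> 0"
    define W where "W = Complex (y0 \<bullet> y) (cross3 x1 y0 \<bullet> y)"
    have l1: "lin a1 y = z1 * W" unfolding f1(1) lin_frame W_def ..
    have l2: "lin a2 y = z2 * W" unfolding f2(1) lin_frame W_def e ..
    have "W \<noteq> 0"
    proof
      assume "W = 0"
      then have "q2 y = 0" unfolding q2[OF y] a2_def[symmetric] l2 using assms(1) by simp
      with nz show False by simp
    qed
    note r = ratio[OF y l1 l2 f2(2) this]
    show "cis (real k * \<alpha>) = q1 y / q2 y" using r cisa unfolding P_def Z_def by simp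
  qed
qed


end
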